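(* Let $U$ be a unitary on $\mathbb C^2\otimes\mathbb C^2$, $\alpha$ a full-rank density operator on $\mathbb C^2$ and $|\beta\rangle\in\mathbb C^2$ a unit vector. If there exist density operators $\alpha',\beta'$ on $\mathbb C^2$ with $U(\alpha\otimes|\beta\rangle\langle\beta|)U^\dagger=\alpha'\otimes\beta'$, then $U$ is a generalized thermal unitary.
   Context: A unitary $U$ on $\mathcal H_A\otimes\mathcal H_B$ is a generalized thermal unitary if there exist Hermitian operators $H_A,H_A'$ on $\mathcal H_A$ and $H_B,H_B'$ on $\mathcal H_B$, with at least one of $H_A,H_B$ not proportional to the identity, such that $U(H_A\otimes\mathbb 1+\mathbb 1\otimes H_B)U^\dagger=H_A'\otimes\mathbb 1+\mathbb 1\otimes H_B'$. *)

theory Defs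
  imports "HOL-Analysis.Analysis"
begin

text \<open>Operators on C^n are represented as complex^'n^'n (finite index type 'n);
  C^2 uses index type 2, and C^2 (x) C^2 uses index type 2 \<times> 2.\<close>

definition adj :: "complex^'n^'m \<Rightarrow> complex^'m^'n" where
  "adj A = (\<chi> i j. cnj (A $ j $ i))"

definition unitary_op :: "complex^'n^'n \<Rightarrow> bool" where
  "unitary_op U \<longleftrightarrow> U ** adj U = mat 1 \<and> adj U ** U = mat 1"

definition hermitian_op :: "complex^'n^'n \<Rightarrow> bool" where
  "hermitian_op A \<longleftrightarrow> adj A = A"

definition psd_op :: "complex^'n^'n \<Rightarrow> bool" where
  "psd_op A \<longleftrightarrow> (\<forall>v::complex^'n.
     Im (\<Sum>i\<in>UNIV. \<Sum>j\<in>UNIV. cnj (v $ i) * A $ i $ j * v $ j) = 0 \<and>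
     0 \<le> Re (\<Sum>i\<in>UNIV. \<Sum>j\<in>UNIV. cnj (v $ i) * A $ i $ j * v $ j))"

definition density_op :: "complex^'n^'n \<Rightarrow> bool" where
  "density_op A \<longleftrightarrow> hermitian_op A \<and> psd_op A \<and> trace A = 1"

definition full_rank :: "complex^'n^'n \<Rightarrow> bool" where
  "full_rank A \<longleftrightarrow> invertible A"

definition unit_vec :: "complex^'n \<Rightarrow> bool" where
  "unit_vec v \<longleftrightarrow> (\<Sum>i\<in>UNIV. (cmod (v $ i))^2) = 1"

definition ket_bra :: "complex^'n \<Rightarrow> complex^'n^'n" where
  "ket_bra v = (\<chi> i j. v $ i * cnj (v $ j))"

definition tensor :: "complex^'a^'a \<Rightarrow> complex^'b^'b \<Rightarrow> complex^('a \<times> 'b)^('a \<times> 'b)" where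
  "tensor A B = (\<chi> p q. A $ fst p $ fst q * B $ snd p $ snd q)"

definition gen_thermal_unitary :: "complex^('a::finite \<times> 'b::finite)^('a \<times> 'b) \<Rightarrow> bool" where
  "gen_thermal_unitary U \<longleftrightarrow> unitary_op U \<and>
    (\<exists>(HA::complex^'a^'a) HA' (HB::complex^'b^'b) HB'.
       hermitian_op HA \<and> hermitian_op HA' \<and> hermitian_op HB \<and> hermitian_op HB' \<and>
       ((\<nexists>c. HA = mat c) \<or> (\<nexists>c. HB = mat c)) \<and>
       U ** (tensor HA (mat 1) + tensor (mat 1) HB) ** adj U
         = tensor HA' (mat 1) + tensor (mat 1) HB')"

end

theory Submission
  imports Defs
begin

lemma adj_mult: "adj (A ** B) = adj B ** adj A"
  by (simp add: adj_def matrix_matrix_mult_def vec_eq_iff mult.commute)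

lemma adj_adj[simp]: "adj (adj A) = A"
  by (simp add: adj_def vec_eq_iff)

lemma adj_tensor: "adj (tensor A B) = tensor (adj A) (adj B)"
  by (simp add: adj_def tensor_def vec_eq_iff)

lemma adj_one[simp]: "adj (mat 1) = mat 1"
  by (simp add: adj_def mat_def vec_eq_iff)

lemma adj_zero[simp]: "adj (mat 0) = mat 0"
  by (simp add: adj_def mat_def vec_eq_iff)

lemma tensor_zero1[simp]: "tensor (mat 0) B = 0"
  by (simp add: tensor_def mat_def vec_eq_iff)

lemma tensor_zero2[simp]: "tensor A (mat 0) = 0"
  by (simp add: tensor_def mat_def vec_eq_iff)

lemma tensor_one: "tensor (mat 1) (mat 1) = mat 1"
  by (auto simp add: tensor_def mat_def vec_eq_iff prod_eq_iff)

lemma tensor_mult: "tensor A B ** tensor C D = tensor (A ** C) (B ** D)"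
proof -
  have "(\<Sum>k\<in>UNIV. (A$fst i$fst k * B$snd i$snd k) * (C$fst k$fst j * D$snd k$snd j))
     = (\<Sum>a\<in>UNIV. A$fst i$a * C$a$fst j) * (\<Sum>b\<in>UNIV. B$snd i$b * D$b$snd j)" for i j
    unfolding sum_product sum.cartesian_product UNIV_Times_UNIV[symmetric]
    by (rule sum.cong) (auto simp: mult_ac)
  then show ?thesis
    by (simp add: tensor_def matrix_matrix_mult_def vec_eq_iff)
qed

lemma trace_tensor: "trace (tensor A B) = trace A * trace B"
  unfolding trace_def tensor_def sum_product sum.cartesian_product UNIV_Times_UNIV[symmetric]
  by (rule sum.cong) auto

lemma adj_0[simp]: "adj 0 = 0"
  by (simp add: adj_def vec_eq_iff)

lemma tensor_01[simp]: "tensor 0 B = 0"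
  by (simp add: tensor_def vec_eq_iff)

lemma tensor_02[simp]: "tensor A 0 = 0"
  by (simp add: tensor_def vec_eq_iff)

definition d2 :: "complex^2^2 \<Rightarrow> complex" where
  "d2 A = A$1$1*A$2$2 - A$1$2*A$2$1"

lemma ch2: assumes "d2 A = 0" "trace A = 1" shows "A ** A = A"
proof -
  have t: "A$1$1 + A$2$2 = 1" using assms(2) by (simp add: trace_def sum_2)
  have d: "A$1$1*A$2$2 = A$1$2*A$2$1" using assms(1) by (simp add: d2_def)
  have "A$1$1 = A$1$1 * (A$1$1 + A$2$2)" "A$2$2 = A$2$2 * (A$1$1 + A$2$2)"
       "A$1$2 = A$1$2 * (A$1$1 + A$2$2)" "A$2$1 = A$2$1 * (A$1$1 + A$2$2)"
    using t by simp_all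
  then show ?thesis using d
    by (simp add: vec_eq_iff forall_2 matrix_matrix_mult_def sum_2 algebra_simps power2_eq_square)
qed

lemma sq_aux: fixes p q r t :: complex
  assumes "p*t \<noteq> q*r" shows "p*(p*(t*t)) + q*(q*(r*r)) \<noteq> 2*(p*(q*(r*t)))"
proof
  assume h: "p*(p*(t*t)) + q*(q*(r*r)) = 2*(p*(q*(r*t)))"
  have "(p*t - q*r)^2 = p*(p*(t*t)) + q*(q*(r*r)) - 2*(p*(q*(r*t)))"
    by (simp add: power2_eq_square algebra_simps)
  with h have "(p*t - q*r)^2 = 0" by simp
  with assms show False by simp
qed

lemma inv2: assumes "d2 A \<noteq> 0" shows "\<exists>B. A ** B = mat 1 \<and> B ** A = mat 1"
proof -
  define B :: "complex^2^2" where "B = (\<chi> i j. (if i = 1 \<and> j = 1 then A$2$2 else if i = 2 \<and> j = 2 then A$1$1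
     else - A$i$j) / d2 A)"
  have "A ** B = mat 1 \<and> B ** A = mat 1"
    using assms
    by (simp add: B_def vec_eq_iff forall_2 matrix_matrix_mult_def sum_2 mat_def d2_def field_simps)
       (simp add: algebra_simps sq_aux)
  then show ?thesis by blast
qed


theorem theorem8:
  fixes U :: "complex^(2 \<times> 2)^(2 \<times> 2)"
    and \<alpha> :: "complex^2^2" and \<beta> :: "complex^2"
  assumes "unitary_op U"
    and "density_op \<alpha>" and "full_rank \<alpha>"
    and "unit_vec \<beta>"
    and "\<exists>\<alpha>' \<beta>'. density_op \<alpha>' \<and> density_op \<beta>' \<and>
           U ** tensor \<alpha> (ket_bra \<beta>) ** adj U = tensor \<alpha>' \<beta>'"
  shows "gen_thermal_unitary U"
proof -
  obtain a' b' where da: "density_op a'" and db: "density_op b'"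
    and eq: "U ** tensor \<alpha> (ket_bra \<beta>) ** adj U = tensor a' b'" using assms(5) by blast
  have UU: "U ** adj U = mat 1" "adj U ** U = mat 1" using assms(1) unfolding unitary_op_def by auto
  define Pb where "Pb = ket_bra \<beta>"
  have un: "(\<Sum>i\<in>UNIV. (cmod (\<beta> $ i))^2) = 1" using assms(4) unfolding unit_vec_def .
  have unc: "(\<Sum>k\<in>UNIV. \<beta>$k * cnj (\<beta>$k)) = 1"
  proof -
    have "(\<Sum>k\<in>UNIV. \<beta>$k * cnj (\<beta>$k)) = (\<Sum>k\<in>UNIV. complex_of_real ((cmod (\<beta> $ k))^2))"
      by (rule sum.cong) (simp_all only: complex_norm_square)
    also have "\<dots> = 1" using un by (metis of_real_1 of_real_sum)
    finally show ?thesis .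
  qed
  have Pb2: "Pb ** Pb = Pb"
  proof -
    have "(\<Sum>k\<in>UNIV. \<beta>$i * cnj (\<beta>$k) * (\<beta>$k * cnj (\<beta>$j))) = \<beta>$i * cnj (\<beta>$j)" for i j
    proof -
      have "(\<Sum>k\<in>UNIV. \<beta>$i * cnj (\<beta>$k) * (\<beta>$k * cnj (\<beta>$j)))
          = \<beta>$i * cnj (\<beta>$j) * (\<Sum>k\<in>UNIV. \<beta>$k * cnj (\<beta>$k))"
        by (simp add: sum_distrib_left mult_ac)
      then show ?thesis using unc by simp
    qed
    then show ?thesis by (simp add: Pb_def ket_bra_def matrix_matrix_mult_def vec_eq_iff)
  qed
  have hPb: "adj Pb = Pb" by (simp add: Pb_def ket_bra_def adj_def vec_eq_iff)
  have trPb: "trace Pb = 1" using unc by (simp add: Pb_def ket_bra_def trace_def)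
  obtain ai where ai: "\<alpha> ** ai = mat 1" "ai ** \<alpha> = mat 1"
    using assms(3) unfolding full_rank_def invertible_def by blast
  define M where "M = tensor \<alpha> Pb"
  define P where "P = tensor (mat 1 :: complex^2^2) Pb"
  define N where "N = tensor a' b'"
  define Q where "Q = U ** P ** adj U"
  define R where "R = U ** tensor ai (mat 1 :: complex^2^2) ** adj U"
  have eqN: "U ** M ** adj U = N" using eq by (simp add: M_def N_def Pb_def)
  have PM: "P ** M = M" by (simp add: P_def M_def tensor_mult Pb2)
  have PfM: "tensor ai (mat 1 :: complex^2^2) ** M = P" by (simp add: P_def M_def tensor_mult ai)
  have hQ: "adj Q = Q" by (simp add: Q_def adj_mult P_def adj_tensor hPb matrix_mul_assoc)
  have QN: "Q ** N = N"
  proof -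
    have "Q ** N = U ** P ** (adj U ** U) ** M ** adj U"
      by (simp add: Q_def eqN[symmetric] matrix_mul_assoc)
    also have "\<dots> = U ** (P ** M) ** adj U" by (simp add: UU matrix_mul_assoc)
    also have "\<dots> = N" by (simp add: PM eqN)
    finally show ?thesis .
  qed
  have QRN: "Q = R ** N"
  proof -
    have "R ** N = U ** tensor ai (mat 1) ** (adj U ** U) ** M ** adj U"
      by (simp add: R_def eqN[symmetric] matrix_mul_assoc)
    also have "\<dots> = U ** (tensor ai (mat 1) ** M) ** adj U" by (simp add: UU matrix_mul_assoc)
    also have "\<dots> = Q" by (simp add: Q_def PfM)
    finally show ?thesis by simp
  qed
  have trQ: "trace Q = 2"
  proof -
    have "trace Q = trace (adj U ** (U ** P))" unfolding Q_def by (rule trace_mul_sym)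
    also have "\<dots> = trace P" by (metis matrix_mul_assoc UU(2) matrix_mul_lid)
    also have "\<dots> = 2" by (simp add: P_def trace_tensor trPb trace_I)
    finally show ?thesis .
  qed
  have ha': "adj a' = a'" and hb': "adj b' = b'" and tra: "trace a' = 1" and trb: "trace b' = 1"
    using da db unfolding density_op_def hermitian_op_def by auto
  have hN: "adj N = N" by (simp add: N_def adj_tensor ha' hb')
  have NQ: "N ** Q = N"
    using arg_cong[OF QN, of adj] by (simp add: adj_mult hN hQ)
  have trN: "trace N = 1" by (simp add: N_def trace_tensor tra trb)
  have hPb_mat: "\<nexists>c. Pb = mat c"
  proof
    assume "\<exists>c. Pb = mat c"
    then obtain c where c: "Pb = mat c" by blast
    have e12: "\<beta>$1 * cnj (\<beta>$2) = 0" using arg_cong[OF c, of "\<lambda>A. A$1$2"]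
      by (simp add: Pb_def ket_bra_def mat_def)
    have e11: "\<beta>$1 * cnj (\<beta>$1) = \<beta>$2 * cnj (\<beta>$2)" using arg_cong[OF c, of "\<lambda>A. A$1$1"]
      arg_cong[OF c, of "\<lambda>A. A$2$2"] by (simp add: Pb_def ket_bra_def mat_def)
    have s: "\<beta>$1 * cnj (\<beta>$1) + \<beta>$2 * cnj (\<beta>$2) = 1" using unc by (simp add: sum_2)
    from e12 have "\<beta>$1 = 0 \<or> \<beta>$2 = 0" by simp
    then show False using e11 s by auto
  qed
  have key: "\<exists>HA' HB'. hermitian_op HA' \<and> hermitian_op HB' \<and>
      Q = tensor HA' (mat 1 :: complex^2^2) + tensor (mat 1 :: complex^2^2) HB'"
  proof (cases "d2 a' = 0")
    case A0: True
    have aa: "a' ** a' = a'" using ch2[OF A0 tra] .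
    show ?thesis
    proof (cases "d2 b' = 0")
      case True
      have bb: "b' ** b' = b'" using ch2[OF True trb] .
      have "N ** N = N" by (simp add: N_def tensor_mult aa bb)
      then have "Q = N" using QRN QN by (metis matrix_mul_assoc)
      then have False using trQ trN by simp
      then show ?thesis ..
    next
      case False
      obtain bi where bi: "b' ** bi = mat 1" "bi ** b' = mat 1" using inv2[OF False] by blast
      define E where "E = tensor a' (mat 1 :: complex^2^2)"
      have EN: "N ** E = N" by (simp add: N_def E_def tensor_mult aa)
      have EfN: "E = tensor (mat 1 :: complex^2^2) bi ** N" by (simp add: N_def E_def tensor_mult bi)
      have QE: "Q ** E = Q" using QRN EN by (metis matrix_mul_assoc)
      have EQ: "E ** Q = E" using EfN NQ by (metis matrix_mul_assoc)
      have hE: "adj E = E" by (simp add: E_def adj_tensor ha')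
      have "Q = E" using arg_cong[OF QE, of adj] by (simp add: adj_mult hE hQ EQ)
      then have "hermitian_op a' \<and> hermitian_op (mat 0 :: complex^2^2) \<and>
          Q = tensor a' (mat 1 :: complex^2^2) + tensor (mat 1 :: complex^2^2) (mat 0)"
        using ha' by (simp add: E_def hermitian_op_def)
      then show ?thesis by blast
    qed
  next
    case A1: False
    obtain ai' where ai': "a' ** ai' = mat 1" "ai' ** a' = mat 1" using inv2[OF A1] by blast
    show ?thesis
    proof (cases "d2 b' = 0")
      case True
      have bb: "b' ** b' = b'" using ch2[OF True trb] .
      define E where "E = tensor (mat 1 :: complex^2^2) b'"
      have EN: "N ** E = N" by (simp add: N_def E_def tensor_mult bb)
      have EfN: "E = tensor ai' (mat 1 :: complex^2^2) ** N" by (simp add: N_def E_def tensor_mult ai')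
      have QE: "Q ** E = Q" using QRN EN by (metis matrix_mul_assoc)
      have EQ: "E ** Q = E" using EfN NQ by (metis matrix_mul_assoc)
      have hE: "adj E = E" by (simp add: E_def adj_tensor hb')
      have "Q = E" using arg_cong[OF QE, of adj] by (simp add: adj_mult hE hQ EQ)
      then have "hermitian_op (mat 0 :: complex^2^2) \<and> hermitian_op b' \<and>
          Q = tensor (mat 0) (mat 1 :: complex^2^2) + tensor (mat 1 :: complex^2^2) b'"
        using hb' by (simp add: E_def hermitian_op_def)
      then show ?thesis by blast
    next
      case False
      obtain bi where bi: "b' ** bi = mat 1" "bi ** b' = mat 1" using inv2[OF False] by blast
      have "N ** tensor ai' bi = mat 1" by (simp add: N_def tensor_mult ai' bi tensor_one)
      then have "Q = mat 1" using QN by (metis matrix_mul_assoc matrix_mul_rid)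
      then have "trace Q = 4" by (simp add: trace_I)
      then have False using trQ by simp
      then show ?thesis ..
    qed
  qed
  then obtain HA' HB' where H: "hermitian_op HA'" "hermitian_op HB'"
      "Q = tensor HA' (mat 1) + tensor (mat 1) HB'" by blast
  have "U ** (tensor (mat 0 :: complex^2^2) (mat 1) + tensor (mat 1 :: complex^2^2) Pb) ** adj U = tensor HA' (mat 1) + tensor (mat 1) HB'"
    using H(3) by (simp add: Q_def P_def)
  moreover have "hermitian_op (mat 0 :: complex^2^2)" "hermitian_op Pb"
    using hPb by (auto simp: hermitian_op_def)
  ultimately show ?thesis unfolding gen_thermal_unitary_def using assms(1) H hPb_mat
    by blast
qed

end
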